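(* Let $f:\mathbb{R}^n\to\mathbb{R}$ be twice differentiable with $\mu I\preceq \nabla^2 f(x)\preceq L I$ for all $x$ (where $0<\mu\le L$), and strongly self-concordant with constant $M\ge 0$. Let $\kappa=L/\mu$. Run the SR1 method with correction strategy: choose $x_0\in\mathbb{R}^n$ with $M\lambda_f(x_0)\le\frac{\ln(3/2)}{4\kappa}$, set $G_0=L\cdot I$, $r_{-1}=0$, and for $k=0,1,2,\dots$ set $x_{k+1}=x_k-G_k^{-1}\nabla f(x_k)$, $u_k=x_{k+1}-x_k$, $r_k=\|u_k\|_{x_k}$, $\widetilde G_k=\left(1+\frac{Mr_{k-1}}{2}\right)\left(1+\frac{Mr_k}{2}\right)G_k$, $J_k=\int_0^1\nabla^2 f(x_k+tu_k)\,dt$, and $G_{k+1}=\mathrm{SR1}(J_k,\widetilde G_k,u_k)$. If $u_k^\top(\widetilde G_k-J_k)u_k=0$, then $(\widetilde G_k-J_k)u_k=0$ and $G_{k+1}=\widetilde G_k$.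
   Context: $f$ is strongly self-concordant with constant $M\ge0$ if $\nabla^2 f(y)-\nabla^2 f(x)\preceq M\|y-x\|_z\nabla^2 f(w)$ for all $x,y,z,w\in\mathbb{R}^n$, where $\|u\|_x=\sqrt{u^\top\nabla^2 f(x)u}$. $\lambda_f(x)=\langle\nabla f(x),[\nabla^2 f(x)]^{-1}\nabla f(x)\rangle^{1/2}$. For symmetric positive definite $A,G$ and $u\neq 0$, $\mathrm{SR1}(A,G,u)=G$ if $(G-A)u=0$, and otherwise $\mathrm{SR1}(A,G,u)=G-\frac{(G-A)uu^\top(G-A)}{u^\top(G-A)u}$. *)

theory Defs
  imports "HOL-Analysis.Analysis"
begin

definition loewner_le :: "real^'n^'n \<Rightarrow> real^'n^'n \<Rightarrow> bool" where
  "loewner_le A B \<longleftrightarrow> (\<forall>v. v \<bullet> (A *v v) \<le> v \<bullet> (B *v v))"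

definition lnorm :: "(real^'n \<Rightarrow> real^'n^'n) \<Rightarrow> real^'n \<Rightarrow> real^'n \<Rightarrow> real" where
  "lnorm H x u = sqrt (u \<bullet> (H x *v u))"

definition strongly_self_concordant :: "(real^'n \<Rightarrow> real^'n^'n) \<Rightarrow> real \<Rightarrow> bool" where
  "strongly_self_concordant H M \<longleftrightarrow>
     M \<ge> 0 \<and> (\<forall>x y z w. loewner_le (H y - H x) ((M * lnorm H z (y - x)) *\<^sub>R H w))"

definition newton_decrement :: "(real^'n \<Rightarrow> real^'n) \<Rightarrow> (real^'n \<Rightarrow> real^'n^'n) \<Rightarrow> real^'n \<Rightarrow> real" where
  "newton_decrement g H x = sqrt (g x \<bullet> (matrix_inv (H x) *v g x))"

definition outer :: "real^'n \<Rightarrow> real^'n \<Rightarrow> real^'n^'n" where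
  "outer u v = (\<chi> i j. u $ i * v $ j)"

definition SR1 :: "real^'n^'n \<Rightarrow> real^'n^'n \<Rightarrow> real^'n \<Rightarrow> real^'n^'n" where
  "SR1 A G u = (if (G - A) *v u = 0 then G
     else G - (1 / (u \<bullet> ((G - A) *v u))) *\<^sub>R ((G - A) ** outer u u ** (G - A)))"

text \<open>One step of SR1 with correction. The state is (x_k, G_k, r_{k-1});
  the result is (x_{k+1}, G_{k+1}, r_k).\<close>
definition sr1_step :: "(real^'n \<Rightarrow> real^'n) \<Rightarrow> (real^'n \<Rightarrow> real^'n^'n) \<Rightarrow> real
    \<Rightarrow> (real^'n) \<times> (real^'n^'n) \<times> real \<Rightarrow> (real^'n) \<times> (real^'n^'n) \<times> real" where
  "sr1_step g H M s = (case s of (x, G, rp) \<Rightarrow>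
     let x' = x - matrix_inv G *v g x;
         u = x' - x;
         r = lnorm H x u;
         Gt = ((1 + M * rp / 2) * (1 + M * r / 2)) *\<^sub>R G;
         J = integral {0..1::real} (\<lambda>t. H (x + t *\<^sub>R u))
     in (x', SR1 J Gt u, r))"

definition sr1_state :: "(real^'n \<Rightarrow> real^'n) \<Rightarrow> (real^'n \<Rightarrow> real^'n^'n) \<Rightarrow> real \<Rightarrow> real
    \<Rightarrow> real^'n \<Rightarrow> nat \<Rightarrow> (real^'n) \<times> (real^'n^'n) \<times> real" where
  "sr1_state g H M L x0 k = (sr1_step g H M ^^ k) (x0, mat L, 0)"

end

theory Submission
  imports Defs
begin

lemma delta_est:
  fixes f :: "real^'n \<Rightarrow> real" and g :: "real^'n \<Rightarrow> real^'n" and A :: "real^'n^'n"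
  assumes grad: "\<And>y. (f has_derivative (\<lambda>h. g y \<bullet> h)) (at y)"
    and dg: "\<And>y. norm (y - x) < d \<Longrightarrow> norm (g y - g x - A *v (y - x)) \<le> e * norm (y - x)"
    and t: "0 < t" "t * (norm a + norm b) < d" and e: "0 \<le> e"
  shows "\<bar>(f (x + t *\<^sub>R a + t *\<^sub>R b) - f (x + t *\<^sub>R a)) - (f (x + t *\<^sub>R b) - f x)
           - t^2 * (a \<bullet> (A *v b))\<bar> \<le> t^2 * e * (2 * norm a + norm b) * norm a"
proof -
  define \<phi> where "\<phi> s = f (x + s *\<^sub>R a + t *\<^sub>R b) - f (x + s *\<^sub>R a)" for s
  have \<phi>': "(\<phi> has_derivative (\<lambda>h. g (x + s *\<^sub>R a + t *\<^sub>R b) \<bullet> (h *\<^sub>R a) - g (x + s *\<^sub>R a) \<bullet> (h *\<^sub>R a))) (at s within {0..t})" for s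
  proof -
    have 1: "((\<lambda>s. x + s *\<^sub>R a + t *\<^sub>R b) has_derivative (\<lambda>h. h *\<^sub>R a)) (at s within {0..t})"
      by (auto intro!: derivative_eq_intros)
    have 2: "((\<lambda>s. x + s *\<^sub>R a) has_derivative (\<lambda>h. h *\<^sub>R a)) (at s within {0..t})"
      by (auto intro!: derivative_eq_intros)
    have "((\<lambda>s. f (x + s *\<^sub>R a + t *\<^sub>R b) - f (x + s *\<^sub>R a)) has_derivative
       (\<lambda>h. g (x + s *\<^sub>R a + t *\<^sub>R b) \<bullet> (h *\<^sub>R a) - g (x + s *\<^sub>R a) \<bullet> (h *\<^sub>R a))) (at s within {0..t})"
      by (intro has_derivative_diff has_derivative_compose[OF 1 grad] has_derivative_compose[OF 2 grad])
    then show ?thesis unfolding \<phi>_def by simp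
  qed
  obtain \<xi> where \<xi>: "\<xi> \<in> {0..t}" and eq: "\<phi> t - \<phi> 0 = g (x + \<xi> *\<^sub>R a + t *\<^sub>R b) \<bullet> ((t - 0) *\<^sub>R a) - g (x + \<xi> *\<^sub>R a) \<bullet> ((t - 0) *\<^sub>R a)"
    using mvt_very_simple[of 0 t \<phi>, OF _ \<phi>'] t by auto
  have lhs: "(f (x + t *\<^sub>R a + t *\<^sub>R b) - f (x + t *\<^sub>R a)) - (f (x + t *\<^sub>R b) - f x) = \<phi> t - \<phi> 0"
    unfolding \<phi>_def by simp
  define y1 where "y1 = x + \<xi> *\<^sub>R a + t *\<^sub>R b"
  define y2 where "y2 = x + \<xi> *\<^sub>R a"
  have n1: "norm (y1 - x) \<le> t * (norm a + norm b)"
  proof -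
    have "norm (y1 - x) \<le> norm (\<xi> *\<^sub>R a) + norm (t *\<^sub>R b)" proof -
      have "y1 - x = \<xi> *\<^sub>R a + t *\<^sub>R b" unfolding y1_def by simp
      then show ?thesis by (metis norm_triangle_ineq)
    qed
    also have "\<dots> \<le> t * norm a + t * norm b" using \<xi> t by (auto intro!: add_mono mult_right_mono)
    finally show ?thesis by (simp add: algebra_simps)
  qed
  have n2: "norm (y2 - x) \<le> t * norm a" using \<xi> t unfolding y2_def by (auto intro!: mult_right_mono)
  have n2': "t * norm a \<le> t * (norm a + norm b)" using t by (simp add: mult_left_mono)
  have E1: "norm (g y1 - g x - A *v (y1 - x)) \<le> e * (t * (norm a + norm b))"
    using dg[of y1] n1 t e by (meson le_less_trans mult_left_mono order_trans)
  have E2: "norm (g y2 - g x - A *v (y2 - x)) \<le> e * (t * norm a)"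
    using dg[of y2] n2 n2' t e by (meson le_less_trans mult_left_mono order_trans)
  have "y1 - x - (y2 - x) = t *\<^sub>R b" unfolding y1_def y2_def by simp
  hence Ad: "A *v (y1 - x) - A *v (y2 - x) = t *\<^sub>R (A *v b)"
    by (metis matrix_vector_mult_diff_distrib matrix_vector_mult_scaleR)
  define err where "err = (g y1 - g x - A *v (y1 - x)) - (g y2 - g x - A *v (y2 - x))"
  have gd: "g y1 - g y2 = t *\<^sub>R (A *v b) + err" unfolding err_def using Ad by (simp add: algebra_simps)
  have nerr: "norm err \<le> e * t * (2 * norm a + norm b)"
  proof -
    have "norm err \<le> norm (g y1 - g x - A *v (y1 - x)) + norm (g y2 - g x - A *v (y2 - x))"
      unfolding err_def by (rule norm_triangle_ineq4)
    also have "\<dots> \<le> e * (t * (norm a + norm b)) + e * (t * norm a)" using E1 E2 by simp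
    finally show ?thesis by (simp add: algebra_simps)
  qed
  have "\<phi> t - \<phi> 0 = t * ((g y1 - g y2) \<bullet> a)" using eq unfolding y1_def y2_def by (simp add: inner_diff_left right_diff_distrib)
  also have "\<dots> = t^2 * (a \<bullet> (A *v b)) + t * (err \<bullet> a)" unfolding gd
    by (simp add: inner_add_left inner_commute power2_eq_square algebra_simps)
  finally have "\<phi> t - \<phi> 0 - t^2 * (a \<bullet> (A *v b)) = t * (err \<bullet> a)" by simp
  moreover have "\<bar>t * (err \<bullet> a)\<bar> \<le> t^2 * e * (2 * norm a + norm b) * norm a"
  proof -
    have "\<bar>err \<bullet> a\<bar> \<le> norm err * norm a" by (rule Cauchy_Schwarz_ineq2)
    also have "\<dots> \<le> e * t * (2 * norm a + norm b) * norm a" using nerr by (simp add: mult_right_mono)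
    finally have "t * \<bar>err \<bullet> a\<bar> \<le> t * (e * t * (2 * norm a + norm b) * norm a)"
      using t by (simp add: mult_left_mono)
    then show ?thesis using t by (simp add: abs_mult power2_eq_square algebra_simps)
  qed
  ultimately show ?thesis using lhs by simp
qed

lemma hess_sym:
  fixes f :: "real^'n \<Rightarrow> real" and g :: "real^'n \<Rightarrow> real^'n" and H :: "real^'n \<Rightarrow> real^'n^'n"
  assumes grad: "\<And>y. (f has_derivative (\<lambda>h. g y \<bullet> h)) (at y)"
    and hess: "\<And>y. (g has_derivative (\<lambda>h. H y *v h)) (at y)"
  shows "a \<bullet> (H x *v b) = b \<bullet> (H x *v a)"
proof -
  define K where "K = (2 * norm a + norm b) * norm a + (2 * norm b + norm a) * norm b"
  have K0: "K \<ge> 0" unfolding K_def by simp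
  have bound: "\<bar>a \<bullet> (H x *v b) - b \<bullet> (H x *v a)\<bar> \<le> e * K" if e_pos: "e > 0" for e
  proof -
    obtain d where d: "d > 0" and dg: "\<And>y. norm (y - x) < d \<Longrightarrow> norm (g y - g x - H x *v (y - x)) \<le> e * norm (y - x)"
      using hess[of x] e_pos unfolding has_derivative_at_alt by blast
    define t where "t = d / (2 * (norm a + norm b + 1))"
    have t0: "0 < t" unfolding t_def using d by (simp add: add_nonneg_pos)
    have "t * (norm a + norm b) < t * (norm a + norm b + 1)" using t0 by simp
    also have "\<dots> = d / 2"
    proof -
      have pos: "norm a + norm b + 1 > 0" by (simp add: add_nonneg_pos)
      then show ?thesis unfolding t_def by (simp add: field_simps)
    qed
    finally have tab: "t * (norm a + norm b) < d" using d by simp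
    hence tba: "t * (norm b + norm a) < d" by (simp add: add.commute)
    have 1: "\<bar>(f (x + t *\<^sub>R a + t *\<^sub>R b) - f (x + t *\<^sub>R a)) - (f (x + t *\<^sub>R b) - f x)
           - t^2 * (a \<bullet> (H x *v b))\<bar> \<le> t^2 * e * (2 * norm a + norm b) * norm a"
      using delta_est[OF grad dg t0 tab less_imp_le[OF e_pos]] .
    have 2: "\<bar>(f (x + t *\<^sub>R b + t *\<^sub>R a) - f (x + t *\<^sub>R b)) - (f (x + t *\<^sub>R a) - f x)
           - t^2 * (b \<bullet> (H x *v a))\<bar> \<le> t^2 * e * (2 * norm b + norm a) * norm b"
      using delta_est[OF grad dg t0 tba less_imp_le[OF e_pos]] .
    have sw: "x + t *\<^sub>R b + t *\<^sub>R a = x + t *\<^sub>R a + t *\<^sub>R b" by (simp add: algebra_simps)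
    define P where "P = (f (x + t *\<^sub>R a + t *\<^sub>R b) - f (x + t *\<^sub>R a)) - (f (x + t *\<^sub>R b) - f x)"
    have 1: "\<bar>P - t^2 * (a \<bullet> (H x *v b))\<bar> \<le> t^2 * e * (2 * norm a + norm b) * norm a"
      using 1 unfolding P_def .
    have 2: "\<bar>P - t^2 * (b \<bullet> (H x *v a))\<bar> \<le> t^2 * e * (2 * norm b + norm a) * norm b"
      using 2 unfolding P_def sw by (simp add: algebra_simps)
    have "\<bar>t^2 * (a \<bullet> (H x *v b)) - t^2 * (b \<bullet> (H x *v a))\<bar> \<le> 
       t^2 * e * (2 * norm a + norm b) * norm a + t^2 * e * (2 * norm b + norm a) * norm b"
      using 1 2 by linarith
    also have "\<dots> = t^2 * (e * K)" unfolding K_def by (simp add: algebra_simps)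
    finally have "t^2 * \<bar>a \<bullet> (H x *v b) - b \<bullet> (H x *v a)\<bar> \<le> t^2 * (e * K)"
      by (simp add: abs_mult right_diff_distrib[symmetric])
    then show ?thesis using t0 by simp
  qed
  show ?thesis
  proof (rule ccontr)
    assume ne: "a \<bullet> (H x *v b) \<noteq> b \<bullet> (H x *v a)"
    define D where "D = \<bar>a \<bullet> (H x *v b) - b \<bullet> (H x *v a)\<bar>"
    have D0: "D > 0" using ne unfolding D_def by simp
    define e where "e = D / (2 * (K + 1))"
    have e0: "e > 0" unfolding e_def using D0 K0 by simp
    have "D \<le> e * K" using bound[OF e0] unfolding D_def .
    also have "e * K < D"
    proof -
      have "e * K \<le> e * (K + 1)" using e0 by simp
      also have "\<dots> = D / 2" unfolding e_def using K0 by (simp add: field_simps)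
      finally show ?thesis using D0 by simp
    qed
    finally show False by simp
  qed
qed

lemma mat_mult_vec: "(mat c :: real^'n^'n) *v x = c *\<^sub>R x"
proof -
  have "(\<Sum>j\<in>UNIV. (if i = j then c else 0) * x $ j) = c * x $ i" for i
  proof -
    have "(\<Sum>j\<in>UNIV. (if i = j then c else 0) * x $ j) = (\<Sum>j\<in>UNIV. if i = j then c * x $ j else 0)"
      by (rule sum.cong) auto
    then show ?thesis by simp
  qed
  then show ?thesis by (simp add: vec_eq_iff matrix_vector_mult_def mat_def)
qed

lemma sym_bf:
  assumes "transpose (A::real^'n^'n) = A"
  shows "a \<bullet> (A *v b) = b \<bullet> (A *v a)"
proof -
  have "a \<bullet> (A *v b) = a \<bullet> (transpose A *v b)" by (subst assms) (rule refl)
  also have "\<dots> = (b v* A) \<bullet> a" by (simp add: inner_commute)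
  also have "\<dots> = b \<bullet> (A *v a)" by (rule dot_lmul_matrix)
  finally show ?thesis .
qed

lemma bf_sym_transpose:
  assumes "\<And>a b. a \<bullet> ((A::real^'n^'n) *v b) = b \<bullet> (A *v a)"
  shows "transpose A = A"
proof -
  have "transpose A *v v = A *v v" for v
  proof -
    have eqw: "(transpose A *v v) \<bullet> w = (A *v v) \<bullet> w" for w
    proof -
      have "(transpose A *v v) \<bullet> w = v \<bullet> (A *v w)" by (simp add: dot_lmul_matrix)
      also have "\<dots> = w \<bullet> (A *v v)" by (rule assms)
      also have "\<dots> = (A *v v) \<bullet> w" by (rule inner_commute)
      finally show ?thesis .
    qed
    hence "(transpose A *v v - A *v v) \<bullet> (transpose A *v v - A *v v) = 0"
      by (simp only: inner_diff_left eqw)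
    then show ?thesis by simp
  qed
  then show ?thesis by (simp add: matrix_eq)
qed

lemma quad_expand:
  fixes D :: "real^'n^'n"
  assumes "transpose D = D"
  shows "(v + s *\<^sub>R u) \<bullet> (D *v (v + s *\<^sub>R u)) =
     v \<bullet> (D *v v) + 2 * s * (v \<bullet> (D *v u)) + s^2 * (u \<bullet> (D *v u))"
  using sym_bf[OF assms, of u v]
  by (simp add: matrix_vector_right_distrib matrix_vector_mult_scaleR inner_add_left inner_add_right
      power2_eq_square algebra_simps)

lemma psd_cs:
  fixes D :: "real^'n^'n"
  assumes sym: "transpose D = D" and psd: "\<And>w. 0 \<le> w \<bullet> (D *v w)"
  shows "(v \<bullet> (D *v u))^2 \<le> (v \<bullet> (D *v v)) * (u \<bullet> (D *v u))"
proof -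
  define a b c where "a = v \<bullet> (D *v v)" and "b = v \<bullet> (D *v u)" and "c = u \<bullet> (D *v u)"
  have Q: "0 \<le> a + 2 * s * b + s^2 * c" for s
    using psd[of "v + s *\<^sub>R u"] unfolding quad_expand[OF sym] a_def b_def c_def .
  have c0: "c \<ge> 0" unfolding c_def by (rule psd)
  show ?thesis
  proof (cases "c = 0")
    case True
    have "b = 0"
    proof (rule ccontr)
      assume "b \<noteq> 0"
      then have "2 * (- (a + 1) / (2 * b)) * b = - (a + 1)" by simp
      then have "a + 2 * (- (a + 1) / (2 * b)) * b + (- (a + 1) / (2 * b))^2 * c = -1"
        using True by simp
      with Q[of "- (a + 1) / (2 * b)"] show False by simp
    qed
    then show ?thesis using True unfolding b_def[symmetric] c_def[symmetric] by simp
  next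
    case False
    hence cp: "c > 0" using c0 by simp
    have "0 \<le> a + 2 * (- b / c) * b + (- b / c)^2 * c" by (rule Q)
    also have "\<dots> = a - b^2 / c" using cp by (simp add: power2_eq_square)
    finally have "b^2 / c \<le> a" by simp
    hence "b^2 \<le> a * c" using cp by (simp add: pos_divide_le_eq)
    then show ?thesis unfolding a_def b_def c_def .
  qed
qed

lemma psd_zero:
  fixes D :: "real^'n^'n"
  assumes sym: "transpose D = D" and psd: "\<And>w. 0 \<le> w \<bullet> (D *v w)"
    and z: "u \<bullet> (D *v u) = 0"
  shows "D *v u = 0"
proof -
  have "((D *v u) \<bullet> (D *v u))^2 \<le> 0"
    using psd_cs[OF sym psd, of "D *v u" u] z by simp
  hence "(D *v u) \<bullet> (D *v u) = 0" by simp
  then show ?thesis by simp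
qed

lemma outer_mult: "outer u u *v w = (u \<bullet> w) *\<^sub>R u"
  by (simp add: vec_eq_iff matrix_vector_mult_def outer_def inner_vec_def sum_distrib_left sum_distrib_right algebra_simps)

lemma outer_transpose: "transpose (outer u u) = outer u u"
  by (simp add: vec_eq_iff transpose_def outer_def mult.commute)

lemma transpose_diff': "transpose (A - B) = transpose A - (transpose B :: real^'n^'n)"
  by (simp add: vec_eq_iff transpose_def)

lemma transpose_scaleR': "transpose (c *\<^sub>R A) = c *\<^sub>R (transpose A :: real^'n^'n)"
  by (simp add: vec_eq_iff transpose_def)

lemma sr1_props:
  fixes A G :: "real^'n^'n"
  assumes sA: "transpose A = A" and sG: "transpose G = G" and le: "loewner_le A G"
  shows "transpose (SR1 A G u) = SR1 A G u \<and> loewner_le A (SR1 A G u)"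
proof (cases "(G - A) *v u = 0")
  case True
  then show ?thesis using sG le by (simp add: SR1_def)
next
  case False
  define D where "D = G - A"
  have sD: "transpose D = D" unfolding D_def transpose_diff' sA sG ..
  have psd: "0 \<le> w \<bullet> (D *v w)" for w
    using le unfolding loewner_le_def D_def by (simp add: matrix_vector_mult_diff_rdistrib inner_diff_right)
  define c where "c = u \<bullet> (D *v u)"
  have c0: "c \<noteq> 0" using psd_zero[OF sD psd] False unfolding c_def D_def by blast
  hence cp: "c > 0" using psd[of u] unfolding c_def by simp
  define X where "X = D ** outer u u ** D"
  have Xv: "X *v v = (u \<bullet> (D *v v)) *\<^sub>R (D *v u)" for v
    unfolding X_def by (simp add: matrix_vector_mul_assoc[symmetric] outer_mult matrix_vector_mult_scaleR)
  have sX: "transpose X = X"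
    unfolding X_def by (simp add: matrix_transpose_mul sD outer_transpose matrix_mul_assoc)
  have S: "SR1 A G u = G - (1 / c) *\<^sub>R X"
    using False unfolding SR1_def c_def X_def D_def by simp
  show ?thesis
  proof
    show "transpose (SR1 A G u) = SR1 A G u" unfolding S transpose_diff' transpose_scaleR' sG sX ..
    show "loewner_le A (SR1 A G u)" unfolding loewner_le_def S
    proof
      fix v
      have cs: "(v \<bullet> (D *v u))^2 \<le> (v \<bullet> (D *v v)) * c" using psd_cs[OF sD psd] unfolding c_def .
      have "v \<bullet> (((1 / c) *\<^sub>R X) *v v) = (v \<bullet> (D *v u))^2 / c"
        using sym_bf[OF sD, of u v]
        by (simp add: scaleR_matrix_vector_assoc[symmetric] Xv power2_eq_square)
      also have "\<dots> \<le> v \<bullet> (D *v v)" using cs cp by (simp add: field_simps)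
      finally have "v \<bullet> (((1 / c) *\<^sub>R X) *v v) \<le> v \<bullet> (G *v v) - v \<bullet> (A *v v)"
        unfolding D_def by (simp add: matrix_vector_mult_diff_rdistrib inner_diff_right)
      then show "v \<bullet> (A *v v) \<le> v \<bullet> ((G - (1 / c) *\<^sub>R X) *v v)"
        by (simp add: matrix_vector_mult_diff_rdistrib inner_diff_right)
    qed
  qed
qed

lemma lin_integral01: "((\<lambda>t::real. c + d * t) has_integral (c + d / 2)) {0..1}"
proof -
  have 1: "((\<lambda>t::real. c) has_integral c) {0..1}" using has_integral_const_real[of c 0 1] by simp
  have 2: "((\<lambda>t::real. d * t) has_integral (d / 2)) {0..1}"
    using has_integral_mult_right[OF ident_has_integral[of 0 1], of d] by simp
  show ?thesis using has_integral_add[OF 1 2] by simp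
qed

lemma bounded_linear_bf: "bounded_linear (\<lambda>A::real^'n^'n. a \<bullet> (A *v b))"
proof -
  have "linear (\<lambda>A::real^'n^'n. a \<bullet> (A *v b))"
    by (rule linearI) (simp_all add: matrix_vector_mult_add_rdistrib inner_add_right
        scaleR_matrix_vector_assoc[symmetric])
  then show ?thesis by (simp add: linear_conv_bounded_linear)
qed

lemma polar:
  assumes "transpose (A::real^'n^'n) = A"
  shows "a \<bullet> (A *v b) = ((a + b) \<bullet> (A *v (a + b)) - (a - b) \<bullet> (A *v (a - b))) / 4"
  using sym_bf[OF assms, of a b]
  by (simp add: matrix_vector_right_distrib matrix_vector_mult_diff_distrib inner_add_left inner_add_right
      inner_diff_left inner_diff_right algebra_simps)

lemma entry_bf: "(A::real^'n^'n) $ i $ j = axis i 1 \<bullet> (A *v axis j 1)"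
  by (simp add: inner_axis' matrix_vector_mul_component inner_axis)

locale hsetting =
  fixes H :: "real^'n \<Rightarrow> real^'n^'n" and \<mu> L M :: real
  assumes mu_pos: "0 < \<mu>"
    and lower: "\<And>x. loewner_le (mat \<mu>) (H x)"
    and upper: "\<And>x. loewner_le (H x) (mat L)"
    and ssc: "strongly_self_concordant H M"
    and symH: "\<And>x. transpose (H x) = H x"
begin

lemma M0: "M \<ge> 0" using ssc by (simp add: strongly_self_concordant_def)

lemma q_lower: "\<mu> * (v \<bullet> v) \<le> v \<bullet> (H x *v v)"
  using lower[of x] by (simp add: loewner_le_def mat_mult_vec)

lemma q_upper: "v \<bullet> (H x *v v) \<le> L * (v \<bullet> v)"
  using upper[of x] by (simp add: loewner_le_def mat_mult_vec)

lemma q_nonneg: "0 \<le> v \<bullet> (H x *v v)"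
proof -
  have "0 \<le> \<mu> * (v \<bullet> v)" using mu_pos by simp
  then show ?thesis using q_lower[of v x] by (rule order_trans)
qed

lemma L0: "L \<ge> 0"
proof -
  obtain v :: "real^'n" where "v \<noteq> 0" using zero_neq_one[where 'a="real^'n"] by blast
  hence "v \<bullet> v > 0" by simp
  moreover have "0 \<le> L * (v \<bullet> v)" using q_nonneg[of v] q_upper[of v] order_trans by blast
  ultimately show ?thesis using mult_neg_pos[of L "v \<bullet> v"] by linarith
qed

lemma ssc_q: "v \<bullet> (H y *v v) - v \<bullet> (H x *v v) \<le> M * lnorm H z (y - x) * (v \<bullet> (H w *v v))"
  using ssc unfolding strongly_self_concordant_def loewner_le_def
  by (simp add: matrix_vector_mult_diff_rdistrib inner_diff_right scaleR_matrix_vector_assoc[symmetric])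

lemma lnorm_nonneg: "0 \<le> lnorm H x w" by (simp add: lnorm_def q_nonneg)

lemma lnorm_le: "lnorm H x w \<le> sqrt L * norm w"
proof -
  have "lnorm H x w \<le> sqrt (L * (w \<bullet> w))" unfolding lnorm_def using q_upper by simp
  also have "\<dots> = sqrt L * norm w" by (simp add: real_sqrt_mult norm_eq_sqrt_inner)
  finally show ?thesis .
qed

lemma lnorm_scale: "lnorm H x (c *\<^sub>R w) = \<bar>c\<bar> * lnorm H x w"
proof -
  have "(c *\<^sub>R w) \<bullet> (H x *v (c *\<^sub>R w)) = c^2 * (w \<bullet> (H x *v w))"
    by (simp add: matrix_vector_mult_scaleR power2_eq_square)
  then show ?thesis unfolding lnorm_def by (simp add: real_sqrt_mult)
qed

lemma lnorm_minus: "lnorm H x (a - b) = lnorm H x (b - a)"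
  using lnorm_scale[of x "-1" "b - a"] by simp

lemma prod_mono3: "0 \<le> m \<Longrightarrow> 0 \<le> a \<Longrightarrow> a \<le> A \<Longrightarrow> 0 \<le> b \<Longrightarrow> b \<le> B \<Longrightarrow> m * a * b \<le> m * A * (B::real)"
  by (simp add: mult_mono mult_left_mono)

lemma q_lip: "\<bar>v \<bullet> (H y *v v) - v \<bullet> (H x *v v)\<bar> \<le> (M * sqrt L * (L * (v \<bullet> v))) * norm (y - x)"
proof -
  have 1: "v \<bullet> (H y *v v) - v \<bullet> (H x *v v) \<le> M * (sqrt L * norm (y - x)) * (L * (v \<bullet> v))"
    using ssc_q[of v y x x x] prod_mono3[OF M0 lnorm_nonneg lnorm_le q_nonneg q_upper] by (rule order_trans)
  have 2: "v \<bullet> (H x *v v) - v \<bullet> (H y *v v) \<le> M * (sqrt L * norm (x - y)) * (L * (v \<bullet> v))"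
    using ssc_q[of v x y y y] prod_mono3[OF M0 lnorm_nonneg lnorm_le q_nonneg q_upper] by (rule order_trans)
  have "norm (x - y) = norm (y - x)" by (rule norm_minus_commute)
  then show ?thesis using 1 2 by (simp add: abs_le_iff algebra_simps)
qed

lemma q_cont: "continuous_on S (\<lambda>x. v \<bullet> (H x *v v))"
proof (rule lipschitz_on_continuous_on)
  show "(M * sqrt L * (L * (v \<bullet> v)))-lipschitz_on S (\<lambda>x. v \<bullet> (H x *v v))"
  proof (rule lipschitz_onI)
    show "dist (v \<bullet> (H x *v v)) (v \<bullet> (H y *v v)) \<le> M * sqrt L * (L * (v \<bullet> v)) * dist x y" for x y
      using q_lip[of v x y] by (simp add: dist_real_def dist_norm)
    show "0 \<le> M * sqrt L * (L * (v \<bullet> v))" using M0 L0 by simp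
  qed
qed

lemma bf_cont: "continuous_on S (\<lambda>x. a \<bullet> (H x *v b))"
proof -
  have "continuous_on S (\<lambda>x. ((a + b) \<bullet> (H x *v (a + b)) - (a - b) \<bullet> (H x *v (a - b))) / 4)"
    by (intro continuous_on_divide continuous_on_diff q_cont continuous_on_const) simp
  then show ?thesis by (subst polar[OF symH]) 
qed

lemma H_cont: "continuous_on S H"
proof -
  have "continuous_on S (\<lambda>x. \<chi> i. \<chi> j. H x $ i $ j)"
    by (intro continuous_on_vec_lambda) (subst entry_bf, rule bf_cont)
  then show ?thesis by simp
qed

end

context hsetting begin

lemma line_cont: "continuous_on {0..1} (\<lambda>t::real. H (x + t *\<^sub>R u))"
  by (rule continuous_on_compose2[OF H_cont[of UNIV]]) (auto intro!: continuous_intros)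

lemma J_int: "(\<lambda>t::real. H (x + t *\<^sub>R u)) integrable_on {0..1}"
  by (rule integrable_continuous_interval[OF line_cont])

lemma bfline_int: "(\<lambda>t::real. a \<bullet> (H (x + t *\<^sub>R u) *v b)) integrable_on {0..1}"
  by (rule integrable_continuous_interval)
     (rule continuous_on_compose2[OF bf_cont[of UNIV]], auto intro!: continuous_intros)

lemma J_bf: "a \<bullet> (integral {0..1} (\<lambda>t. H (x + t *\<^sub>R u)) *v b)
    = integral {0..1} (\<lambda>t. a \<bullet> (H (x + t *\<^sub>R u) *v b))"
  using integral_linear[OF J_int bounded_linear_bf, of a b] by (simp add: o_def)

lemma J_sym: "transpose (integral {0..1} (\<lambda>t. H (x + t *\<^sub>R u))) = integral {0..1} (\<lambda>t. H (x + t *\<^sub>R u))"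
  by (rule bf_sym_transpose) (simp add: J_bf sym_bf[OF symH])

lemma J_upper: "v \<bullet> (integral {0..1} (\<lambda>t. H (x + t *\<^sub>R u)) *v v)
   \<le> (1 + M * lnorm H x u / 2) * (v \<bullet> (H x *v v))"
proof -
  define c where "c = v \<bullet> (H x *v v)"
  define r where "r = lnorm H x u"
  have pt: "v \<bullet> (H (x + t *\<^sub>R u) *v v) \<le> c + (M * r * c) * t" if "t \<in> {0..1}" for t
  proof -
    have "v \<bullet> (H (x + t *\<^sub>R u) *v v) - c \<le> M * lnorm H x (x + t *\<^sub>R u - x) * c"
      unfolding c_def by (rule ssc_q)
    also have "lnorm H x (x + t *\<^sub>R u - x) = t * r" using that unfolding r_def by (simp add: lnorm_scale)
    finally show ?thesis by (simp add: algebra_simps)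
  qed
  have "integral {0..1} (\<lambda>t. v \<bullet> (H (x + t *\<^sub>R u) *v v)) \<le> integral {0..1} (\<lambda>t. c + (M * r * c) * t)"
    by (rule integral_le[OF bfline_int _ pt]) (use lin_integral01 in blast)
  also have "\<dots> = c + M * r * c / 2" using lin_integral01 by (rule integral_unique)
  finally show ?thesis unfolding J_bf c_def r_def by (simp add: algebra_simps)
qed

lemma J_lower: "v \<bullet> (H (x + u) *v v)
   \<le> (1 + M * lnorm H x u / 2) * (v \<bullet> (integral {0..1} (\<lambda>t. H (x + t *\<^sub>R u)) *v v))"
proof -
  define r where "r = lnorm H x u"
  define qJ where "qJ = v \<bullet> (integral {0..1} (\<lambda>t. H (x + t *\<^sub>R u)) *v v)"
  define c where "c = v \<bullet> (H (x + u) *v v)"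
  have qJ: "((\<lambda>t. v \<bullet> (H (x + t *\<^sub>R u) *v v)) has_integral qJ) {0..1}"
    unfolding qJ_def J_bf using bfline_int by (rule integrable_integral)
  have step: "c - qJ \<le> (M * r / 2) * (v \<bullet> (H w *v v))" for w
  proof -
    define K where "K = M * r * (v \<bullet> (H w *v v))"
    have pt: "c \<le> v \<bullet> (H (x + t *\<^sub>R u) *v v) + (K + (- K) * t)" if "t \<in> {0..1}" for t
    proof -
      have "c - v \<bullet> (H (x + t *\<^sub>R u) *v v) \<le> M * lnorm H x (x + u - (x + t *\<^sub>R u)) * (v \<bullet> (H w *v v))"
        unfolding c_def by (rule ssc_q)
      also have "x + u - (x + t *\<^sub>R u) = (1 - t) *\<^sub>R u" by (simp add: algebra_simps)
      also have "lnorm H x ((1 - t) *\<^sub>R u) = (1 - t) * r" using that unfolding r_def by (simp add: lnorm_scale)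
      finally show ?thesis unfolding K_def by (simp add: algebra_simps)
    qed
    have I: "((\<lambda>t. v \<bullet> (H (x + t *\<^sub>R u) *v v) + (K + (- K) * t)) has_integral (qJ + (K + (- K) / 2))) {0..1}"
      by (rule has_integral_add[OF qJ lin_integral01])
    have "integral {0..1} (\<lambda>t::real. c) \<le> integral {0..1} (\<lambda>t. v \<bullet> (H (x + t *\<^sub>R u) *v v) + (K + (- K) * t))"
      by (rule integral_le[OF _ _ pt]) (use I in blast)+
    also have "\<dots> = qJ + (K + (- K) / 2)" using I by (rule integral_unique)
    finally have "c \<le> qJ + K / 2" by simp
    then show ?thesis unfolding K_def by (simp add: algebra_simps)
  qed
  have "integral {0..1} (\<lambda>s::real. c - qJ) \<le> integral {0..1} (\<lambda>s. (M * r / 2) * (v \<bullet> (H (x + s *\<^sub>R u) *v v)))"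
    by (rule integral_le[OF _ _ step]) (use has_integral_mult_right[OF qJ, of "M * r / 2"] in blast)+
  also have "\<dots> = (M * r / 2) * qJ"
    using has_integral_mult_right[OF qJ, of "M * r / 2"] by (rule integral_unique)
  finally have "c - qJ \<le> (M * r / 2) * qJ" by simp
  then show ?thesis unfolding c_def qJ_def r_def by (simp add: algebra_simps)
qed

end

definition inv_st :: "(real^'n \<Rightarrow> real^'n^'n) \<Rightarrow> real \<Rightarrow> (real^'n) \<times> (real^'n^'n) \<times> real \<Rightarrow> bool" where
  "inv_st H M s = (case s of (x, G, rp) \<Rightarrow>
     transpose G = G \<and> rp \<ge> 0 \<and> loewner_le (H x) ((1 + M * rp / 2) *\<^sub>R G))"

context hsetting begin

lemma key:
  fixes x u :: "real^'n" and G :: "real^'n^'n" and rp :: real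
  assumes sG: "transpose G = G" and rp: "rp \<ge> 0" and le: "loewner_le (H x) ((1 + M * rp / 2) *\<^sub>R G)"
  defines "Gt \<equiv> ((1 + M * rp / 2) * (1 + M * lnorm H x u / 2)) *\<^sub>R G"
    and "J \<equiv> integral {0..1::real} (\<lambda>t. H (x + t *\<^sub>R u))"
  shows "transpose Gt = Gt" "transpose J = J" "loewner_le J Gt"
    "inv_st H M (x + u, SR1 J Gt u, lnorm H x u)"
proof -
  show sGt: "transpose Gt = Gt" unfolding Gt_def transpose_scaleR' sG ..
  show sJ: "transpose J = J" unfolding J_def by (rule J_sym)
  have r0: "lnorm H x u \<ge> 0" by (rule lnorm_nonneg)
  have f0: "1 + M * lnorm H x u / 2 \<ge> 0" using r0 M0 by simp
  show leJ: "loewner_le J Gt" unfolding loewner_le_def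
  proof
    fix v
    have "v \<bullet> (J *v v) \<le> (1 + M * lnorm H x u / 2) * (v \<bullet> (H x *v v))" unfolding J_def by (rule J_upper)
    also have "\<dots> \<le> (1 + M * lnorm H x u / 2) * (v \<bullet> (((1 + M * rp / 2) *\<^sub>R G) *v v))"
      using le f0 unfolding loewner_le_def by (simp add: mult_left_mono)
    also have "\<dots> = v \<bullet> (Gt *v v)" unfolding Gt_def
      by (simp add: scaleR_matrix_vector_assoc[symmetric])
    finally show "v \<bullet> (J *v v) \<le> v \<bullet> (Gt *v v)" .
  qed
  have sr: "transpose (SR1 J Gt u) = SR1 J Gt u \<and> loewner_le J (SR1 J Gt u)"
    by (rule sr1_props[OF sJ sGt leJ])
  have "loewner_le (H (x + u)) ((1 + M * lnorm H x u / 2) *\<^sub>R SR1 J Gt u)" unfolding loewner_le_def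
  proof
    fix v
    have "v \<bullet> (H (x + u) *v v) \<le> (1 + M * lnorm H x u / 2) * (v \<bullet> (J *v v))" unfolding J_def by (rule J_lower)
    also have "\<dots> \<le> (1 + M * lnorm H x u / 2) * (v \<bullet> (SR1 J Gt u *v v))"
      using sr f0 unfolding loewner_le_def by (simp add: mult_left_mono)
    also have "\<dots> = v \<bullet> (((1 + M * lnorm H x u / 2) *\<^sub>R SR1 J Gt u) *v v)"
      by (simp add: scaleR_matrix_vector_assoc[symmetric])
    finally show "v \<bullet> (H (x + u) *v v) \<le> v \<bullet> (((1 + M * lnorm H x u / 2) *\<^sub>R SR1 J Gt u) *v v)" .
  qed
  then show "inv_st H M (x + u, SR1 J Gt u, lnorm H x u)" unfolding inv_st_def using sr r0 by simp
qed

lemma inv_all: "inv_st H M (sr1_state g H M L x0 k)"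
proof (induction k)
  case 0
  have "loewner_le (H x0) ((1 + M * 0 / 2) *\<^sub>R mat L)" using upper by simp
  then show ?case unfolding inv_st_def sr1_state_def by simp
next
  case (Suc k)
  obtain x G rp where st: "sr1_state g H M L x0 k = (x, G, rp)" by (metis prod_cases3)
  define x' where "x' = x - matrix_inv G *v g x"
  define u where "u = x' - x"
  have xu: "x + u = x'" unfolding u_def by simp
  have I: "transpose G = G" "rp \<ge> 0" "loewner_le (H x) ((1 + M * rp / 2) *\<^sub>R G)"
    using Suc.IH unfolding st inv_st_def by auto
  have "sr1_state g H M L x0 (Suc k) = sr1_step g H M (x, G, rp)"
    using st unfolding sr1_state_def by simp
  also have "\<dots> = (x', SR1 (integral {0..1::real} (\<lambda>t. H (x + t *\<^sub>R u)))
       (((1 + M * rp / 2) * (1 + M * lnorm H x u / 2)) *\<^sub>R G) u, lnorm H x u)"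
    unfolding sr1_step_def Let_def prod.case x'_def[symmetric] u_def[symmetric] by (rule refl)
  finally show ?case using key(4)[OF I, of u] unfolding xu by simp
qed

end

theorem proposition1:
  fixes f :: "real^'n \<Rightarrow> real"
    and g :: "real^'n \<Rightarrow> real^'n"
    and H :: "real^'n \<Rightarrow> real^'n^'n"
    and \<mu> L M :: real
    and x0 :: "real^'n"
  assumes grad: "\<And>x. (f has_derivative (\<lambda>h. g x \<bullet> h)) (at x)"
    and hess: "\<And>x. (g has_derivative (\<lambda>h. H x *v h)) (at x)"
    and mu_pos: "0 < \<mu>" and mu_le_L: "\<mu> \<le> L"
    and lower: "\<And>x. loewner_le (mat \<mu>) (H x)"
    and upper: "\<And>x. loewner_le (H x) (mat L)"
    and ssc: "strongly_self_concordant H M"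
    and init: "M * newton_decrement g H x0 \<le> ln (3/2) / (4 * (L / \<mu>))"
  shows "\<forall>k. case sr1_state g H M L x0 k of (x, G, rp) \<Rightarrow>
           (let x' = x - matrix_inv G *v g x;
                u = x' - x;
                r = lnorm H x u;
                Gt = ((1 + M * rp / 2) * (1 + M * r / 2)) *\<^sub>R G;
                J = integral {0..1::real} (\<lambda>t. H (x + t *\<^sub>R u))
            in u \<bullet> ((Gt - J) *v u) = 0 \<longrightarrow>
                 (Gt - J) *v u = 0 \<and> fst (snd (sr1_state g H M L x0 (Suc k))) = Gt)"
  proof -
  have symH: "\<And>x. transpose (H x) = H x"
    by (rule bf_sym_transpose) (rule hess_sym[OF grad hess])
  interpret hsetting H \<mu> L M
    using mu_pos lower upper ssc symH by unfold_locales
  show ?thesis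
  proof (intro allI)
    fix k
    obtain x G rp where st: "sr1_state g H M L x0 k = (x, G, rp)" by (metis prod_cases3)
    define x' where "x' = x - matrix_inv G *v g x"
    define u where "u = x' - x"
    define r where "r = lnorm H x u"
    define Gt where "Gt = ((1 + M * rp / 2) * (1 + M * r / 2)) *\<^sub>R G"
    define J where "J = integral {0..1::real} (\<lambda>t. H (x + t *\<^sub>R u))"
    have I: "transpose G = G" "rp \<ge> 0" "loewner_le (H x) ((1 + M * rp / 2) *\<^sub>R G)"
      using inv_all[of g x0 k] unfolding st inv_st_def by auto
    have sGt: "transpose Gt = Gt" and sJ: "transpose J = J" and le: "loewner_le J Gt"
      using key(1-3)[OF I, of u] unfolding Gt_def J_def r_def by auto
    have sD: "transpose (Gt - J) = Gt - J" unfolding transpose_diff' sGt sJ ..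
    have psd: "0 \<le> w \<bullet> ((Gt - J) *v w)" for w
      using le unfolding loewner_le_def by (simp add: matrix_vector_mult_diff_rdistrib inner_diff_right)
    have nxt: "sr1_state g H M L x0 (Suc k) = (x', SR1 J Gt u, r)"
    proof -
      have "sr1_state g H M L x0 (Suc k) = sr1_step g H M (x, G, rp)"
        using st unfolding sr1_state_def by simp
      also have "\<dots> = (x', SR1 J Gt u, r)"
        unfolding sr1_step_def Let_def prod.case x'_def[symmetric] u_def[symmetric] r_def[symmetric]
          Gt_def[symmetric] J_def[symmetric] by (rule refl)
      finally show ?thesis .
    qed
    have main: "u \<bullet> ((Gt - J) *v u) = 0 \<longrightarrow> (Gt - J) *v u = 0 \<and> fst (snd (sr1_state g H M L x0 (Suc k))) = Gt"
    proof
      assume z: "u \<bullet> ((Gt - J) *v u) = 0"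
      have D0: "(Gt - J) *v u = 0" by (rule psd_zero[OF sD psd z])
      then show "(Gt - J) *v u = 0 \<and> fst (snd (sr1_state g H M L x0 (Suc k))) = Gt"
        unfolding nxt by (simp add: SR1_def)
    qed
    show "case sr1_state g H M L x0 k of (x, G, rp) \<Rightarrow>
           (let x' = x - matrix_inv G *v g x;
                u = x' - x;
                r = lnorm H x u;
                Gt = ((1 + M * rp / 2) * (1 + M * r / 2)) *\<^sub>R G;
                J = integral {0..1::real} (\<lambda>t. H (x + t *\<^sub>R u))
            in u \<bullet> ((Gt - J) *v u) = 0 \<longrightarrow>
                 (Gt - J) *v u = 0 \<and> fst (snd (sr1_state g H M L x0 (Suc k))) = Gt)"
      unfolding st Let_def prod.case x'_def[symmetric] u_def[symmetric] r_def[symmetric]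
          Gt_def[symmetric] J_def[symmetric] by (rule main)
  qed
qed

end
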